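(* Let $(X,G)$ be a dislocation space with $X$ a reflexive Banach space, and let $(u_n)$ be a bounded sequence in $X$. Suppose that sequences $(g^{(1)}_n),(g^{(2)}_n)\subset G$ and $w^{(1)},w^{(2)}\in X$ satisfy $(g^{(1)}_n)^{-1}u_n\to w^{(1)}$ weakly in $X$ and $(g^{(2)}_n)^{-1}(u_n-g^{(1)}_nw^{(1)})\to w^{(2)}$ weakly in $X$, with $w^{(2)}\neq0$. Then $(g^{(1)}_n)^{-1}g^{(2)}_n\rightharpoonup 0$ operator-weakly as $n\to\infty$.
   Context: Dislocation space: a Banach space $X$ with a group $G\subset\mathcal{B}(X)$ (under composition) of bijective linear isometries such that (1) every $(g_n)\subset G$ with $g_n\not\rightharpoonup0$ has an operator-strongly convergent subsequence (limit in $\mathcal{B}(X)$), and (2) for every $(g_n)\subset G$ with $g_n\not\rightharpoonup0$ and every $(u_n)\subset X$ with $u_n\to0$ weakly, there is a subsequence with $g_{n_j}u_{n_j}\to0$ weakly. Here $A_n\rightharpoonup A$ (operator-weakly) means $A_nu\to Au$ weakly for all $u\in X$, and operator-strong convergence means $A_nu\to Au$ in norm for all $u$. *)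

theory Defs
  imports "HOL-Analysis.Analysis"
begin

definition weak_conv :: "(nat \<Rightarrow> 'a::real_normed_vector) \<Rightarrow> 'a \<Rightarrow> bool" where
  "weak_conv x l \<longleftrightarrow> (\<forall>f :: 'a \<Rightarrow>\<^sub>L real. (\<lambda>n. blinfun_apply f (x n)) \<longlonglongrightarrow> blinfun_apply f l)"

definition op_weak_conv :: "(nat \<Rightarrow> 'a \<Rightarrow> 'a::real_normed_vector) \<Rightarrow> ('a \<Rightarrow> 'a) \<Rightarrow> bool" where
  "op_weak_conv A B \<longleftrightarrow> (\<forall>u. weak_conv (\<lambda>n. A n u) (B u))"

definition op_strong_conv :: "(nat \<Rightarrow> 'a \<Rightarrow> 'a::real_normed_vector) \<Rightarrow> ('a \<Rightarrow> 'a) \<Rightarrow> bool" where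
  "op_strong_conv A B \<longleftrightarrow> (\<forall>u. (\<lambda>n. A n u) \<longlonglongrightarrow> B u)"

definition reflexive_space :: "'a::real_normed_vector itself \<Rightarrow> bool" where
  "reflexive_space _ \<longleftrightarrow>
     (\<forall>\<Phi> :: ('a \<Rightarrow>\<^sub>L real) \<Rightarrow>\<^sub>L real. \<exists>x::'a. \<forall>f. blinfun_apply \<Phi> f = blinfun_apply f x)"

definition dislocation_space :: "('a::banach \<Rightarrow>\<^sub>L 'a) set \<Rightarrow> bool" where
  "dislocation_space G \<longleftrightarrow>
     (\<forall>g\<in>G. bij (blinfun_apply g) \<and> (\<forall>x. norm (blinfun_apply g x) = norm x)) \<and>
     id_blinfun \<in> G \<and>
     (\<forall>g\<in>G. \<forall>h\<in>G. g o\<^sub>L h \<in> G) \<and>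
     (\<forall>g\<in>G. \<exists>h\<in>G. blinfun_apply h = inv (blinfun_apply g)) \<and>
     (\<forall>gs :: nat \<Rightarrow> 'a \<Rightarrow>\<^sub>L 'a. (\<forall>n. gs n \<in> G) \<and>
         \<not> op_weak_conv (\<lambda>n. blinfun_apply (gs n)) (\<lambda>_. 0) \<longrightarrow>
         (\<exists>r A. strict_mono r \<and> op_strong_conv (\<lambda>j. blinfun_apply (gs (r j))) (blinfun_apply A))) \<and>
     (\<forall>(gs :: nat \<Rightarrow> 'a \<Rightarrow>\<^sub>L 'a) (us :: nat \<Rightarrow> 'a). (\<forall>n. gs n \<in> G) \<and>
         \<not> op_weak_conv (\<lambda>n. blinfun_apply (gs n)) (\<lambda>_. 0) \<and> weak_conv us 0 \<longrightarrow>
         (\<exists>r. strict_mono r \<and> weak_conv (\<lambda>j. blinfun_apply (gs (r j)) (us (r j))) 0))"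

end

theory Submission
  imports Defs
begin

definition lin_graph :: "('a::real_normed_vector \<times> real) set \<Rightarrow> bool" where
 "lin_graph H \<longleftrightarrow> (0,0)\<in>H \<and> (\<forall>x a y b. (x,a)\<in>H \<longrightarrow> (y,b)\<in>H \<longrightarrow> (x+y,a+b)\<in>H)
    \<and> (\<forall>c x a. (x,a)\<in>H \<longrightarrow> (c *\<^sub>R x, c*a)\<in>H) \<and> (\<forall>x a. (x,a)\<in>H \<longrightarrow> a \<le> norm x)"

lemma lin_graph_ext:
  fixes M :: "('a::real_normed_vector \<times> real) set"
  assumes M: "lin_graph M" and y: "y \<notin> fst ` M"
  shows "\<exists>M'. lin_graph M' \<and> M \<subseteq> M' \<and> (\<exists>c. (y,c) \<in> M')"
proof -
  have add: "(x+x',a+a')\<in>M" if "(x,a)\<in>M" "(x',a')\<in>M" for x a x' a'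
    using M that unfolding lin_graph_def by blast
  have sc: "(t *\<^sub>R x, t*a)\<in>M" if "(x,a)\<in>M" for x a t
    using M that unfolding lin_graph_def by blast
  have bd: "a \<le> norm x" if "(x,a)\<in>M" for x a
    using M that unfolding lin_graph_def by blast
  have z: "(0,0)\<in>M" using M unfolding lin_graph_def by blast
  define S where "S = {a - norm (x - y) | x a. (x,a)\<in>M}"
  have key: "a - norm (x - y) \<le> norm (x' + y) - a'" if "(x,a)\<in>M" "(x',a')\<in>M" for x a x' a'
  proof -
    have "a + a' \<le> norm (x + x')" using bd[OF add[OF that]] .
    also have "x + x' = (x - y) + (x' + y)" by simp
    also have "norm \<dots> \<le> norm (x - y) + norm (x' + y)" by (rule norm_triangle_ineq)
    finally show ?thesis by linarith
  qed
  have Sne: "S \<noteq> {}" using z unfolding S_def by blast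
  have Sbdd: "bdd_above S" unfolding S_def bdd_above_def
    using key[OF _ z] by auto
  define c where "c = Sup S"
  have lo: "a - norm (x - y) \<le> c" if "(x,a)\<in>M" for x a
    unfolding c_def by (rule cSup_upper[OF _ Sbdd]) (use that S_def in blast)
  have hi: "c \<le> norm (x' + y) - a'" if "(x',a')\<in>M" for x' a'
    unfolding c_def by (rule cSup_least[OF Sne]) (use key that S_def in blast)
  define M' where "M' = {(x + t *\<^sub>R y, a + t*c) | x a t. (x,a)\<in>M}"
  have "lin_graph M'"
    unfolding lin_graph_def
  proof (intro conjI allI impI)
    show "(0,0) \<in> M'" unfolding M'_def using z by force
  next
    fix x a x' a' assume "(x,a)\<in>M'" "(x',a')\<in>M'"
    then obtain x1 a1 t1 x2 a2 t2 where "(x1,a1)\<in>M" "(x2,a2)\<in>M"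
      "x = x1 + t1 *\<^sub>R y" "a = a1 + t1*c" "x' = x2 + t2 *\<^sub>R y" "a' = a2 + t2*c"
      unfolding M'_def by blast
    moreover have "x+x' = (x1+x2) + (t1+t2) *\<^sub>R y \<and> a+a' = (a1+a2) + (t1+t2)*c"
      using calculation by (simp add: algebra_simps)
    ultimately show "(x+x',a+a')\<in>M'" unfolding M'_def using add by blast
  next
    fix s x a assume "(x,a)\<in>M'"
    then obtain x1 a1 t1 where "(x1,a1)\<in>M" "x = x1 + t1 *\<^sub>R y" "a = a1 + t1*c"
      unfolding M'_def by blast
    moreover have "s *\<^sub>R x = s *\<^sub>R x1 + (s*t1) *\<^sub>R y \<and> s*a = s*a1 + (s*t1)*c"
      using calculation by (simp add: algebra_simps)
    ultimately show "(s *\<^sub>R x, s*a)\<in>M'" unfolding M'_def using sc by blast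
  next
    fix x a assume "(x,a)\<in>M'"
    then obtain x1 a1 t where m: "(x1,a1)\<in>M" and xa: "x = x1 + t *\<^sub>R y" "a = a1 + t*c"
      unfolding M'_def by blast
    consider "t = 0" | "t > 0" | "t < 0" by linarith
    then show "a \<le> norm x"
    proof cases
      case 1 then show ?thesis using bd[OF m] xa by simp
    next
      case 2
      have "c \<le> norm ((1/t) *\<^sub>R x1 + y) - (1/t)*a1" using hi[OF sc[OF m]] .
      hence "t*c \<le> t*(norm ((1/t) *\<^sub>R x1 + y) - (1/t)*a1)" using 2 by simp
      also have "\<dots> = t * norm ((1/t) *\<^sub>R x1 + y) - a1" using 2
        by (simp add: right_diff_distrib)
      also have "t * norm ((1/t) *\<^sub>R x1 + y) = norm (t *\<^sub>R ((1/t) *\<^sub>R x1 + y))" using 2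
        by simp
      also have "t *\<^sub>R ((1/t) *\<^sub>R x1 + y) = x1 + t *\<^sub>R y" using 2
        by (simp add: algebra_simps)
      finally show ?thesis using xa by simp
    next
      case 3
      define s where "s = -t"
      have s: "s > 0" using 3 s_def by simp
      have "(1/s)*a1 - norm ((1/s) *\<^sub>R x1 - y) \<le> c" using lo[OF sc[OF m]] .
      hence "s*((1/s)*a1 - norm ((1/s) *\<^sub>R x1 - y)) \<le> s*c" using s by simp
      moreover have "s*((1/s)*a1 - norm ((1/s) *\<^sub>R x1 - y)) = a1 - s * norm ((1/s) *\<^sub>R x1 - y)"
        using s by (simp add: right_diff_distrib)
      moreover have "s * norm ((1/s) *\<^sub>R x1 - y) = norm (s *\<^sub>R ((1/s) *\<^sub>R x1 - y))"
        using s by simp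
      moreover have "s *\<^sub>R ((1/s) *\<^sub>R x1 - y) = x1 + t *\<^sub>R y" using s
        by (simp add: algebra_simps s_def)
      ultimately have "a1 - norm (x1 + t *\<^sub>R y) \<le> s*c" by simp
      then show ?thesis using xa s_def by simp
    qed
  qed
  moreover have "M \<subseteq> M'" unfolding M'_def by force
  moreover have "(y,c) \<in> M'" unfolding M'_def using z by force
  ultimately show ?thesis by blast
qed

lemma hahn_banach_norm:
  fixes w :: "'a::real_normed_vector"
  shows "\<exists>f :: 'a \<Rightarrow>\<^sub>L real. blinfun_apply f w = norm w"
proof -
  define A where "A = {H. lin_graph H \<and> (w, norm w) \<in> H}"
  define H0 where "H0 = {(t *\<^sub>R w, t * norm w) | t. True}"
  have H0: "H0 \<in> A"
    unfolding A_def lin_graph_def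
  proof (intro CollectI conjI allI impI)
    show "((0::'a),0::real) \<in> H0" unfolding H0_def by (rule CollectI, rule exI[of _ 0], simp)
    show "(w, norm w) \<in> H0" unfolding H0_def by (rule CollectI, rule exI[of _ 1], simp)
  next
    fix x a y b assume "(x,a) \<in> H0" "(y,b) \<in> H0"
    then obtain t s where "x = t *\<^sub>R w" "a = t * norm w" "y = s *\<^sub>R w" "b = s * norm w" unfolding H0_def by blast
    then show "(x+y,a+b) \<in> H0" unfolding H0_def
      by (auto intro!: exI[of _ "t+s"] simp: algebra_simps)
  next
    fix c x a assume "(x,a) \<in> H0"
    then obtain t where "x = t *\<^sub>R w" "a = t * norm w" unfolding H0_def by blast
    then show "(c *\<^sub>R x, c*a) \<in> H0" unfolding H0_def
      by (auto intro!: exI[of _ "c*t"])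
  next
    fix x a assume "(x,a) \<in> H0"
    then obtain t where "x = t *\<^sub>R w" "a = t * norm w" unfolding H0_def by blast
    then show "a \<le> norm x" by (auto intro!: mult_right_mono)
  qed
  have "\<forall>C\<in>chains A. \<exists>U\<in>A. \<forall>X\<in>C. X \<subseteq> U"
  proof
    fix C assume C: "C \<in> chains A"
    show "\<exists>U\<in>A. \<forall>X\<in>C. X \<subseteq> U"
    proof (cases "C = {}")
      case True then show ?thesis using H0 by blast
    next
      case False
      have CA: "C \<subseteq> A" and ch: "\<And>X Y. X\<in>C \<Longrightarrow> Y\<in>C \<Longrightarrow> X \<subseteq> Y \<or> Y \<subseteq> X"
        using C unfolding chains_def chain_subset_def by auto
      have lg: "\<And>X. X \<in> C \<Longrightarrow> lin_graph X" and ww: "\<And>X. X\<in>C \<Longrightarrow> (w, norm w) \<in> X"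
        using CA unfolding A_def by auto
      have "\<Union>C \<in> A" unfolding A_def lin_graph_def
      proof (intro CollectI conjI allI impI)
        show "(0,0) \<in> \<Union>C" using False lg unfolding lin_graph_def by blast
        show "(w, norm w) \<in> \<Union>C" using False ww by blast
      next
        fix x a y b assume "(x,a) \<in> \<Union>C" "(y,b) \<in> \<Union>C"
        then obtain X Y where XY: "X\<in>C" "Y\<in>C" "(x,a)\<in>X" "(y,b)\<in>Y" by blast
        from ch[OF XY(1,2)] show "(x+y,a+b) \<in> \<Union>C"
        proof
          assume "X \<subseteq> Y" then show ?thesis using XY lg[OF XY(2)] unfolding lin_graph_def by blast
        next
          assume "Y \<subseteq> X" then show ?thesis using XY lg[OF XY(1)] unfolding lin_graph_def by blast
        qed
      next
        fix c x a assume "(x,a) \<in> \<Union>C"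
        then show "(c *\<^sub>R x, c*a) \<in> \<Union>C" using lg unfolding lin_graph_def by blast
      next
        fix x a assume "(x,a) \<in> \<Union>C"
        then show "a \<le> norm x" using lg unfolding lin_graph_def by blast
      qed
      then show ?thesis by blast
    qed
  qed
  from Zorn_Lemma2[OF this] obtain M where MA: "M \<in> A" and max: "\<forall>X\<in>A. M \<subseteq> X \<longrightarrow> X = M"
    by blast
  have M: "lin_graph M" and wM: "(w, norm w) \<in> M" using MA unfolding A_def by auto
  have add: "(x+x',a+a')\<in>M" if "(x,a)\<in>M" "(x',a')\<in>M" for x a x' a'
    using M that unfolding lin_graph_def by blast
  have sc: "(t *\<^sub>R x, t*a)\<in>M" if "(x,a)\<in>M" for x a t
    using M that unfolding lin_graph_def by blast
  have bd: "a \<le> norm x" if "(x,a)\<in>M" for x a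
    using M that unfolding lin_graph_def by blast
  have tot: "\<exists>a. (x,a) \<in> M" for x
  proof (rule ccontr)
    assume nx: "\<not> (\<exists>a. (x,a) \<in> M)"
    hence "x \<notin> fst ` M" by force
    from lin_graph_ext[OF M this] obtain M' where "lin_graph M'" "M \<subseteq> M'" "\<exists>c. (x,c)\<in>M'" by blast
    moreover have "M' \<in> A" using \<open>lin_graph M'\<close> \<open>M \<subseteq> M'\<close> wM unfolding A_def by auto
    ultimately show False using max nx by blast
  qed
  have uniq: "a = b" if "(x,a)\<in>M" "(x,b)\<in>M" for x a b
  proof -
    have "(x + (-1) *\<^sub>R x, a + (-1)*b) \<in> M" using add[OF that(1) sc[OF that(2)]] .
    hence 1: "(0, a - b) \<in> M" by simp
    have "a - b \<le> 0" using bd[OF 1] by simp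
    moreover have "(-1)*(a-b) \<le> norm ((-1) *\<^sub>R (0::'a))" using bd[OF sc[OF 1]] .
    ultimately show ?thesis by simp
  qed
  define f where "f x = (THE a. (x,a)\<in>M)" for x
  have fM: "(x, f x) \<in> M" for x
    unfolding f_def using tot uniq by (metis theI)
  have fv: "(x,a)\<in>M \<Longrightarrow> f x = a" for x a using fM uniq by blast
  have bl: "bounded_linear f"
  proof (rule bounded_linear_intro[where K=1])
    show "f (x + y) = f x + f y" for x y using fv[OF add[OF fM fM]] .
    show "f (r *\<^sub>R x) = r *\<^sub>R f x" for r x using fv[OF sc[OF fM]] by simp
    show "norm (f x) \<le> norm x * 1" for x
    proof -
      have "f x \<le> norm x" using bd[OF fM] .
      moreover have "-1 * f x \<le> norm ((-1) *\<^sub>R x)" using bd[OF sc[OF fM]] .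
      ultimately show ?thesis by simp
    qed
  qed
  show ?thesis
    by (rule exI[of _ "Blinfun f"]) (simp add: bounded_linear_Blinfun_apply[OF bl] fv[OF wM])
qed


lemma weak_conv_unique:
  fixes x :: "nat \<Rightarrow> 'a::real_normed_vector"
  assumes "weak_conv x l" "weak_conv x l'" shows "l = l'"
proof -
  obtain f :: "'a \<Rightarrow>\<^sub>L real" where f: "blinfun_apply f (l - l') = norm (l - l')"
    using hahn_banach_norm by blast
  have "blinfun_apply f l = blinfun_apply f l'"
    using assms LIMSEQ_unique unfolding weak_conv_def by blast
  hence "norm (l - l') = 0" using f by (simp add: blinfun.diff_right)
  thus ?thesis by simp
qed

lemma weak_conv_subseq:
  assumes "weak_conv x l" "strict_mono r" shows "weak_conv (\<lambda>n. x (r n)) l"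
  using assms LIMSEQ_subseq_LIMSEQ unfolding weak_conv_def o_def by blast

lemma weak_conv_diff_const:
  assumes "weak_conv x l" shows "weak_conv (\<lambda>n. x n - c) (l - c)"
  using assms unfolding weak_conv_def by (auto simp: blinfun.diff_right intro!: tendsto_diff)

theorem mainTheorem5:
  fixes G :: "('a::banach \<Rightarrow>\<^sub>L 'a) set"
    and u :: "nat \<Rightarrow> 'a"
    and g1 g2 :: "nat \<Rightarrow> ('a \<Rightarrow>\<^sub>L 'a)"
    and w1 w2 :: 'a
  assumes "dislocation_space G"
    and "reflexive_space TYPE('a)"
    and "bounded (range u)"
    and "\<forall>n. g1 n \<in> G" and "\<forall>n. g2 n \<in> G"
    and "weak_conv (\<lambda>n. inv (blinfun_apply (g1 n)) (u n)) w1"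
    and "weak_conv (\<lambda>n. inv (blinfun_apply (g2 n)) (u n - blinfun_apply (g1 n) w1)) w2"
    and "w2 \<noteq> 0"
  shows "op_weak_conv (\<lambda>n. inv (blinfun_apply (g1 n)) \<circ> blinfun_apply (g2 n)) (\<lambda>_. 0)"
proof (rule ccontr)
  assume nc: "\<not> ?thesis"
  have iso: "\<And>g. g \<in> G \<Longrightarrow> bij (blinfun_apply g) \<and> (\<forall>x. norm (blinfun_apply g x) = norm x)"
    and comp: "\<And>g h. g\<in>G \<Longrightarrow> h\<in>G \<Longrightarrow> g o\<^sub>L h \<in> G"
    and invG: "\<And>g. g\<in>G \<Longrightarrow> \<exists>h\<in>G. blinfun_apply h = inv (blinfun_apply g)"
    and c1: "\<And>gs :: nat \<Rightarrow> 'a \<Rightarrow>\<^sub>L 'a. (\<forall>n. gs n \<in> G) \<Longrightarrow>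
         \<not> op_weak_conv (\<lambda>n. blinfun_apply (gs n)) (\<lambda>_. 0) \<Longrightarrow>
         (\<exists>r A. strict_mono r \<and> op_strong_conv (\<lambda>j. blinfun_apply (gs (r j))) (blinfun_apply A))"
    and c2: "\<And>(gs :: nat \<Rightarrow> 'a \<Rightarrow>\<^sub>L 'a) (us :: nat \<Rightarrow> 'a). (\<forall>n. gs n \<in> G) \<Longrightarrow>
         \<not> op_weak_conv (\<lambda>n. blinfun_apply (gs n)) (\<lambda>_. 0) \<Longrightarrow> weak_conv us 0 \<Longrightarrow>
         (\<exists>r. strict_mono r \<and> weak_conv (\<lambda>j. blinfun_apply (gs (r j)) (us (r j))) 0)"
    using assms(1) unfolding dislocation_space_def by blast+
  have "\<forall>n. \<exists>k. k \<in> G \<and> blinfun_apply k = inv (blinfun_apply (g1 n))"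
    using invG assms(4) by blast
  then obtain k1 where k1: "\<And>n. k1 n \<in> G" "\<And>n. blinfun_apply (k1 n) = inv (blinfun_apply (g1 n))"
    by metis
  define hs where "hs n = k1 n o\<^sub>L g2 n" for n
  have hsG: "\<And>n. hs n \<in> G" unfolding hs_def using comp k1 assms(5) by blast
  have hsa: "blinfun_apply (hs n) = inv (blinfun_apply (g1 n)) \<circ> blinfun_apply (g2 n)" for n
    unfolding hs_def using k1 by (auto simp: fun_eq_iff)
  have nc': "\<not> op_weak_conv (\<lambda>n. blinfun_apply (hs n)) (\<lambda>_. 0)"
    using nc by (simp add: hsa)
  obtain r A where r: "strict_mono r" and sc: "op_strong_conv (\<lambda>j. blinfun_apply (hs (r j))) (blinfun_apply A)"
    using c1[OF _ nc'] hsG by blast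
  have "\<forall>j. \<exists>k. k \<in> G \<and> blinfun_apply k = inv (blinfun_apply (hs (r j)))"
    using invG hsG by blast
  then obtain ks where ks: "\<And>j. ks j \<in> G" "\<And>j. blinfun_apply (ks j) = inv (blinfun_apply (hs (r j)))"
    by metis
  have ksinv: "blinfun_apply (ks j) (blinfun_apply (hs (r j)) z) = z" for j z
    using ks(2) iso[OF hsG] by (simp add: bij_is_inj)
  have ksnorm: "norm (blinfun_apply (ks j) x) = norm x" for j x
    using iso[OF ks(1)] by blast
  have lim: "(\<lambda>j. blinfun_apply (ks j) (blinfun_apply A w2)) \<longlonglongrightarrow> w2"
  proof -
    have "(\<lambda>j. blinfun_apply (hs (r j)) w2) \<longlonglongrightarrow> blinfun_apply A w2"
      using sc unfolding op_strong_conv_def by blast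
    hence "(\<lambda>j. blinfun_apply (hs (r j)) w2 - blinfun_apply A w2) \<longlonglongrightarrow> 0"
      by (simp add: LIM_zero)
    hence "(\<lambda>j. norm (blinfun_apply (hs (r j)) w2 - blinfun_apply A w2)) \<longlonglongrightarrow> 0"
      by (simp add: tendsto_norm_zero_iff)
    moreover have "norm (blinfun_apply (hs (r j)) w2 - blinfun_apply A w2) =
        norm (blinfun_apply (ks j) (blinfun_apply A w2) - w2)" for j
    proof -
      have "blinfun_apply (ks j) (blinfun_apply A w2) - w2 =
          blinfun_apply (ks j) (blinfun_apply A w2 - blinfun_apply (hs (r j)) w2)"
        by (simp add: blinfun.diff_right ksinv)
      thus ?thesis by (simp add: ksnorm norm_minus_commute)
    qed
    ultimately have "(\<lambda>j. norm (blinfun_apply (ks j) (blinfun_apply A w2) - w2)) \<longlonglongrightarrow> 0"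
      by simp
    thus ?thesis by (simp add: tendsto_norm_zero_iff LIM_zero_cancel)
  qed
  have ncks: "\<not> op_weak_conv (\<lambda>j. blinfun_apply (ks j)) (\<lambda>_. 0)"
  proof
    assume "op_weak_conv (\<lambda>j. blinfun_apply (ks j)) (\<lambda>_. 0)"
    hence "weak_conv (\<lambda>j. blinfun_apply (ks j) (blinfun_apply A w2)) 0"
      unfolding op_weak_conv_def by blast
    moreover have "weak_conv (\<lambda>j. blinfun_apply (ks j) (blinfun_apply A w2)) w2"
      unfolding weak_conv_def
      by (intro allI bounded_linear.tendsto[OF blinfun.bounded_linear_right] lim)
    ultimately have "w2 = 0" using weak_conv_unique by metis
    thus False using assms(8) by simp
  qed
  define us where "us j = inv (blinfun_apply (g1 (r j))) (u (r j)) - w1" for j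
  have "weak_conv us 0"
    unfolding us_def using weak_conv_diff_const[OF weak_conv_subseq[OF assms(6) r], of w1] by simp
  then obtain r' where r': "strict_mono r'"
    and wc: "weak_conv (\<lambda>i. blinfun_apply (ks (r' i)) (us (r' i))) 0"
    using c2[OF _ ncks] ks(1) by blast
  define v where "v n = inv (blinfun_apply (g2 n)) (u n - blinfun_apply (g1 n) w1)" for n
  have eq: "blinfun_apply (ks j) (us j) = v (r j)" for j
  proof -
    let ?m = "r j"
    have b1: "bij (blinfun_apply (g1 ?m))" and b2: "bij (blinfun_apply (g2 ?m))"
      using iso assms(4,5) by blast+
    have "blinfun_apply (hs ?m) (v ?m) = inv (blinfun_apply (g1 ?m)) (u ?m - blinfun_apply (g1 ?m) w1)"
      unfolding hsa v_def using b2 by (simp add: bij_is_surj surj_f_inv_f)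
    also have "\<dots> = blinfun_apply (k1 ?m) (u ?m) - blinfun_apply (k1 ?m) (blinfun_apply (g1 ?m) w1)"
      by (simp add: k1(2)[symmetric] blinfun.diff_right)
    also have "\<dots> = us j" unfolding us_def using b1 by (simp add: k1(2) bij_is_inj)
    finally show ?thesis using ksinv by metis
  qed
  have "weak_conv (\<lambda>i. v (r (r' i))) w2"
    using weak_conv_subseq[OF weak_conv_subseq[OF assms(7)[folded v_def] r] r'] .
  moreover have "weak_conv (\<lambda>i. v (r (r' i))) 0" using wc by (simp add: eq)
  ultimately have "w2 = 0" using weak_conv_unique by metis
  thus False using assms(8) by simp
qed

end
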